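(* Let $\beta\ge1$ and let $x,y\in\mathbb R^d\setminus\{0\}$. For $\gamma>0$ define $$\cos_{(\beta,\gamma)}(x,y)=\Big\langle\Big(\frac{x}{\|x\|_{\beta+\gamma}}\Big)^{\ominus\beta},\Big(\frac{y}{\|y\|_{\beta+\gamma}}\Big)^{\ominus\gamma}\Big\rangle .$$ Then (a) $\displaystyle\lim_{\gamma\to0}\cos_{(\beta,\gamma)}(x,y)=\Big\langle\Big(\frac{x}{\|x\|_\beta}\Big)^{\ominus\beta},\mathrm{sign}(y)\Big\rangle$, where $\mathrm{sign}(y)=(\mathrm{sign}(y_i))_{i=1}^d$; (b) $\displaystyle\lim_{\gamma\to\infty}\cos_{(\beta,\gamma)}(x,y)=\Big\langle\Big(\frac{x}{\|x\|_\infty}\Big)^{\ominus\beta},\frac{\mathrm{sign}_\infty(y)}{\|\mathrm{sign}_\infty(y)\|_1}\Big\rangle$, where the $i$-th component of $\mathrm{sign}_\infty(y)$ is $\mathrm{sign}(y_i)\,\mathbb I(|y_i|=\|y\|_\infty)$.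
   Context: $\langle\cdot,\cdot\rangle$ is the Euclidean inner product on $\mathbb R^d$; $\|x\|_r=(\sum_i|x_i|^r)^{1/r}$ and $\|x\|_\infty=\max_i|x_i|$. For a vector $v$ and $a>0$, $v^{\ominus a}$ is taken componentwise with $t^{\ominus a}=\mathrm{sign}(t)|t|^a$ and $\mathrm{sign}(0)=0$; $\mathbb I$ is the indicator function. *)

theory Defs
  imports "HOL-Analysis.Analysis"
begin

definition lnorm :: "real \<Rightarrow> real^'d \<Rightarrow> real" where
  "lnorm r x = (\<Sum>i\<in>UNIV. \<bar>x $ i\<bar> powr r) powr (1 / r)"

definition linf :: "real^'d \<Rightarrow> real" where
  "linf x = Max ((\<lambda>i. \<bar>x $ i\<bar>) ` UNIV)"

text \<open>signed power t^(ominus a) = sign(t) |t|^a, with sign 0 = 0\<close>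
definition spow :: "real \<Rightarrow> real \<Rightarrow> real" where
  "spow a t = sgn t * \<bar>t\<bar> powr a"

definition vspow :: "real \<Rightarrow> real^'d \<Rightarrow> real^'d" where
  "vspow a v = (\<chi> i. spow a (v $ i))"

definition vsign :: "real^'d \<Rightarrow> real^'d" where
  "vsign y = (\<chi> i. sgn (y $ i))"

definition sign_inf :: "real^'d \<Rightarrow> real^'d" where
  "sign_inf y = (\<chi> i. sgn (y $ i) * (if \<bar>y $ i\<bar> = linf y then 1 else 0))"

definition cos_bg :: "real \<Rightarrow> real \<Rightarrow> real^'d \<Rightarrow> real^'d \<Rightarrow> real" where
  "cos_bg \<beta> \<gamma> x y =
     vspow \<beta> ((1 / lnorm (\<beta> + \<gamma>) x) *\<^sub>R x) \<bullet> vspow \<gamma> ((1 / lnorm (\<beta> + \<gamma>) y) *\<^sub>R y)"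

end

theory Submission
  imports Defs "HOL-Real_Asymp.Real_Asymp"
begin

lemma powr_lt1_top:
  fixes a :: real assumes "0 < a" "a < 1"
  shows "((\<lambda>t. a powr t) \<longlongrightarrow> 0) at_top"
proof -
  have "ln a < 0" using assms by simp
  have "filterlim (\<lambda>t. t * ln a) at_bot at_top"
    using \<open>ln a < 0\<close> by real_asymp
  then have "((\<lambda>t. exp (t * ln a)) \<longlongrightarrow> 0) at_top"
    using exp_at_bot filterlim_compose by blast
  then show ?thesis using assms by (simp add: powr_def mult.commute)
qed

lemma powr_le1_top:
  fixes a :: real assumes "0 \<le> a" "a \<le> 1"
  shows "((\<lambda>t. a powr t) \<longlongrightarrow> (if a = 1 then 1 else 0)) at_top"
proof (cases "a = 0")
  case True then show ?thesis by simp
next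
  case False
  show ?thesis
  proof (cases "a = 1")
    case True then show ?thesis by simp
  next
    case False
    then show ?thesis using powr_lt1_top[of a] assms \<open>a \<noteq> 0\<close> by simp
  qed
qed

definition nT :: "real^'d \<Rightarrow> real \<Rightarrow> real" where
  "nT z p = (\<Sum>j\<in>UNIV. (\<bar>z$j\<bar> / linf z) powr p)"

definition nK :: "real^'d \<Rightarrow> real" where
  "nK z = (\<Sum>j\<in>UNIV. if \<bar>z$j\<bar> = linf z then 1 else 0)"

lemma linf_ge: "\<bar>z$j\<bar> \<le> linf z"
  unfolding linf_def by (rule Max_ge) auto

lemma linf_attained: "\<exists>j. \<bar>z$j\<bar> = linf z"
proof -
  have "linf z \<in> (\<lambda>i. \<bar>z $ i\<bar>) ` UNIV"
    unfolding linf_def by (rule Max_in) auto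
  then show ?thesis by auto
qed

lemma linf_pos: assumes "z \<noteq> 0" shows "linf z > 0"
proof -
  obtain j where "z $ j \<noteq> 0" using assms by (metis vec_eq_iff zero_index)
  then show ?thesis using linf_ge[of z j] by linarith
qed

lemma nT_ge1: assumes "z \<noteq> 0" shows "nT z p \<ge> 1"
proof -
  obtain j where j: "\<bar>z$j\<bar> = linf z" using linf_attained by blast
  have M: "linf z > 0" using linf_pos[OF assms] .
  have "1 = (\<bar>z$j\<bar> / linf z) powr p" using j M by simp
  also have "\<dots> \<le> nT z p" unfolding nT_def
    by (rule member_le_sum) auto
  finally show ?thesis .
qed

lemma nK_ge1: assumes "z \<noteq> 0" shows "nK z \<ge> 1"
proof -
  obtain j where j: "\<bar>z$j\<bar> = linf z" using linf_attained by blast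
  have "1 = (if \<bar>z$j\<bar> = linf z then 1 else (0::real))" using j by simp
  also have "\<dots> \<le> nK z" unfolding nK_def
    by (rule member_le_sum) auto
  finally show ?thesis .
qed

lemma lnorm_eq:
  assumes "z \<noteq> 0" "p \<noteq> 0"
  shows "lnorm p z = linf z * nT z p powr (1/p)"
proof -
  define M where "M = linf z"
  have M: "M > 0" using linf_pos[OF assms(1)] M_def by simp
  have "(\<Sum>i\<in>UNIV. \<bar>z $ i\<bar> powr p) = (\<Sum>i\<in>UNIV. M powr p * (\<bar>z$i\<bar> / M) powr p)"
  proof (rule sum.cong)
    fix i
    show "\<bar>z $ i\<bar> powr p = M powr p * (\<bar>z$i\<bar> / M) powr p"
      using M by (simp add: powr_divide)
  qed simp
  also have "\<dots> = M powr p * nT z p" unfolding nT_def M_def by (simp add: sum_distrib_left)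
  finally have S: "(\<Sum>i\<in>UNIV. \<bar>z $ i\<bar> powr p) = M powr p * nT z p" .
  have "lnorm p z = (M powr p * nT z p) powr (1/p)" by (simp only: lnorm_def S)
  also have "\<dots> = (M powr p) powr (1/p) * nT z p powr (1/p)"
    using nT_ge1[OF assms(1), of p] M by (simp add: powr_mult)
  also have "(M powr p) powr (1/p) = M" using assms(2) M by (simp add: powr_powr)
  finally show ?thesis unfolding M_def .
qed

lemma lnorm_pos: assumes "z \<noteq> 0" "p \<noteq> 0" shows "lnorm p z > 0"
  using lnorm_eq[OF assms] linf_pos[OF assms(1)] nT_ge1[OF assms(1), of p] by simp

lemma nT_cont:
  assumes "(f \<longlongrightarrow> r0) F"
  shows "((\<lambda>t. nT z (f t)) \<longlongrightarrow> nT z r0) F"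
  unfolding nT_def
proof (rule tendsto_sum)
  fix j
  show "((\<lambda>t. (\<bar>z$j\<bar> / linf z) powr f t) \<longlongrightarrow> (\<bar>z$j\<bar> / linf z) powr r0) F"
  proof (cases "\<bar>z$j\<bar> / linf z = 0")
    case True then show ?thesis unfolding True by simp
  next
    case False then show ?thesis by (intro tendsto_powr assms tendsto_const)
  qed
qed

lemma nT_top:
  assumes "z \<noteq> 0" "filterlim f at_top F"
  shows "((\<lambda>t. nT z (f t)) \<longlongrightarrow> nK z) F"
  unfolding nT_def nK_def
proof (rule tendsto_sum)
  fix j
  have M: "linf z > 0" using linf_pos[OF assms(1)] .
  have a: "0 \<le> \<bar>z$j\<bar> / linf z" "\<bar>z$j\<bar> / linf z \<le> 1" using M linf_ge[of z j] by auto
  have e: "(\<bar>z$j\<bar> / linf z = 1) = (\<bar>z$j\<bar> = linf z)" using M by auto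
  have "((\<lambda>t. (\<bar>z$j\<bar> / linf z) powr t) \<longlongrightarrow> (if \<bar>z$j\<bar> = linf z then 1 else 0)) at_top"
    using powr_le1_top[OF a] unfolding e .
  then show "((\<lambda>t. (\<bar>z$j\<bar> / linf z) powr f t) \<longlongrightarrow> (if \<bar>z$j\<bar> = linf z then 1 else 0)) F"
    using assms(2) by (rule filterlim_compose)
qed

lemma lnorm_tendsto:
  assumes "z \<noteq> 0" "(f \<longlongrightarrow> r0) F" "r0 > 0"
  shows "((\<lambda>t. lnorm (f t) z) \<longlongrightarrow> lnorm r0 z) F"
proof -
  have ev: "eventually (\<lambda>t. f t > 0) F" using order_tendstoD(1)[OF assms(2,3)] .
  have "((\<lambda>t. linf z * nT z (f t) powr (1 / f t)) \<longlongrightarrow> linf z * nT z r0 powr (1 / r0)) F"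
    using nT_ge1[OF assms(1), of r0] assms
    by (intro tendsto_mult tendsto_const tendsto_powr nT_cont tendsto_divide) auto
  then have "((\<lambda>t. linf z * nT z (f t) powr (1 / f t)) \<longlongrightarrow> lnorm r0 z) F"
    using lnorm_eq[OF assms(1), of r0] assms(3) by simp
  then show ?thesis
    by (rule Lim_transform_eventually)
       (use ev lnorm_eq[OF assms(1)] in \<open>auto elim: eventually_mono\<close>)
qed

lemma lnorm_top:
  assumes "z \<noteq> 0" "filterlim f at_top F"
  shows "((\<lambda>t. lnorm (f t) z) \<longlongrightarrow> linf z) F"
proof -
  have ev: "eventually (\<lambda>t. f t > 0) F" using assms(2) by (simp add: filterlim_at_top_dense)
  have "((\<lambda>t. 1 / f t) \<longlongrightarrow> 0) F"
    by (rule tendsto_divide_0[OF tendsto_const filterlim_at_top_imp_at_infinity[OF assms(2)]])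
  then have "((\<lambda>t. linf z * nT z (f t) powr (1 / f t)) \<longlongrightarrow> linf z * nK z powr 0) F"
    using nK_ge1[OF assms(1)] assms
    by (intro tendsto_mult tendsto_const tendsto_powr nT_top) auto
  then have "((\<lambda>t. linf z * nT z (f t) powr (1 / f t)) \<longlongrightarrow> linf z) F"
    using nK_ge1[OF assms(1)] by simp
  then show ?thesis
    by (rule Lim_transform_eventually)
       (use ev lnorm_eq[OF assms(1)] in \<open>auto elim: eventually_mono\<close>)
qed

lemma spow_div: assumes "L > 0" shows "spow a (c / L) = spow a c / L powr a"
  using assms by (simp add: spow_def sgn_divide powr_divide abs_divide)

lemma cos_bg_sum:
  "cos_bg b g x y = (\<Sum>i\<in>UNIV. spow b (x$i / lnorm (b+g) x) * spow g (y$i / lnorm (b+g) y))"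
  unfolding cos_bg_def inner_vec_def vspow_def by simp
lemma spow_div2: assumes "L > 0" shows "spow g (c / L) = sgn c * (\<bar>c\<bar> powr g / L powr g)"
proof -
  have a: "sgn (c/L) = sgn c" using assms by (simp add: sgn_divide)
  have b: "\<bar>c/L\<bar> = \<bar>c\<bar> / L" using assms by simp
  have c: "(\<bar>c\<bar> / L) powr g = \<bar>c\<bar> powr g / L powr g" using assms by (simp add: powr_divide)
  show ?thesis unfolding spow_def a b c ..
qed

lemma lnorm_sign_inf: assumes "y \<noteq> 0" shows "lnorm 1 (sign_inf y) = nK y"
proof -
  have M: "linf y > 0" using linf_pos[OF assms] .
  have "\<bar>sign_inf y $ j\<bar> powr 1 = (if \<bar>y$j\<bar> = linf y then 1 else 0)" for j
    using M by (auto simp: sign_inf_def abs_mult sgn_if)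
  then show ?thesis using nK_ge1[OF assms] unfolding lnorm_def nK_def by simp
qed

lemma partA:
  fixes x y :: "real^'d" and \<beta> :: real
  assumes "\<beta> \<ge> 1" and "x \<noteq> 0" and "y \<noteq> 0"
  shows "((\<lambda>\<gamma>. cos_bg \<beta> \<gamma> x y) \<longlongrightarrow>
            vspow \<beta> ((1 / lnorm \<beta> x) *\<^sub>R x) \<bullet> vsign y) (at_right 0)"
proof -
  define F where "F = (at_right (0::real))"
  have ev: "eventually (\<lambda>\<gamma>. \<gamma> > 0) F" unfolding F_def by (simp add: eventually_at_right_less)
  have id: "((\<lambda>\<gamma>. \<gamma>) \<longlongrightarrow> 0) F" unfolding F_def by (rule tendsto_ident_at)
  have bg: "((\<lambda>\<gamma>. \<beta> + \<gamma>) \<longlongrightarrow> \<beta>) F" using tendsto_add[OF tendsto_const id, of \<beta>] by simp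
  have Lx: "((\<lambda>\<gamma>. lnorm (\<beta>+\<gamma>) x) \<longlongrightarrow> lnorm \<beta> x) F"
    using lnorm_tendsto[OF assms(2) bg] assms(1) by simp
  have Ly: "((\<lambda>\<gamma>. lnorm (\<beta>+\<gamma>) y) \<longlongrightarrow> lnorm \<beta> y) F"
    using lnorm_tendsto[OF assms(3) bg] assms(1) by simp
  have Lx0: "lnorm \<beta> x > 0" using lnorm_pos[OF assms(2)] assms(1) by simp
  have Ly0: "lnorm \<beta> y > 0" using lnorm_pos[OF assms(3)] assms(1) by simp
  define g where "g = (\<lambda>\<gamma>. \<Sum>i\<in>UNIV. spow \<beta> (x$i) / lnorm (\<beta>+\<gamma>) x powr \<beta> *
      (sgn (y$i) * (\<bar>y$i\<bar> powr \<gamma> / lnorm (\<beta>+\<gamma>) y powr \<gamma>)))"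
  have comp: "((\<lambda>\<gamma>. sgn (y$i) * (\<bar>y$i\<bar> powr \<gamma> / lnorm (\<beta>+\<gamma>) y powr \<gamma>)) \<longlongrightarrow> sgn (y$i)) F" for i
  proof (cases "y$i = 0")
    case True then show ?thesis by simp
  next
    case False
    have "((\<lambda>\<gamma>. sgn (y$i) * (\<bar>y$i\<bar> powr \<gamma> / lnorm (\<beta>+\<gamma>) y powr \<gamma>)) \<longlongrightarrow>
        sgn (y$i) * (\<bar>y$i\<bar> powr 0 / lnorm \<beta> y powr 0)) F"
      using False Ly0 by (intro tendsto_intros Ly id) auto
    then show ?thesis using False Ly0 by simp
  qed
  have "(g \<longlongrightarrow> (\<Sum>i\<in>UNIV. spow \<beta> (x$i) / lnorm \<beta> x powr \<beta> * sgn (y$i))) F"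
    unfolding g_def using Lx0
    by (intro tendsto_sum tendsto_mult tendsto_divide tendsto_const tendsto_powr Lx comp) auto
  moreover have "(\<Sum>i\<in>UNIV. spow \<beta> (x$i) / lnorm \<beta> x powr \<beta> * sgn (y$i)) =
      vspow \<beta> ((1 / lnorm \<beta> x) *\<^sub>R x) \<bullet> vsign y"
    unfolding inner_vec_def vspow_def vsign_def using Lx0 by (simp add: spow_div)
  moreover have "eventually (\<lambda>\<gamma>. g \<gamma> = cos_bg \<beta> \<gamma> x y) F"
    using ev
  proof (rule eventually_mono)
    fix \<gamma> :: real assume "\<gamma> > 0"
    then have P: "lnorm (\<beta>+\<gamma>) x > 0" "lnorm (\<beta>+\<gamma>) y > 0"
      using lnorm_pos[OF assms(2), of "\<beta>+\<gamma>"] lnorm_pos[OF assms(3), of "\<beta>+\<gamma>"] assms(1) by auto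
    show "g \<gamma> = cos_bg \<beta> \<gamma> x y"
      unfolding g_def cos_bg_sum
      by (simp only: spow_div[OF P(1)] spow_div2[OF P(2)])
  qed
  ultimately show ?thesis unfolding F_def[symmetric]
    using Lim_transform_eventually[where F=F and f=g] by simp
qed

lemma eqB:
  assumes "y \<noteq> 0" "p > 0" "L = lnorm p y"
  shows "spow g (c / L) = sgn c * ((\<bar>c\<bar> / linf y) powr g / nT y p powr (g / p))"
proof -
  have M: "linf y > 0" using linf_pos[OF assms(1)] .
  have T: "nT y p > 0" using nT_ge1[OF assms(1), of p] by simp
  have L: "L = linf y * nT y p powr (1/p)" using lnorm_eq[OF assms(1)] assms by simp
  have "L powr g = linf y powr g * nT y p powr (g / p)"
    unfolding L using M T by (simp add: powr_mult powr_powr)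
  moreover have "L > 0" using L M T by simp
  ultimately show ?thesis using M by (simp add: spow_div2 powr_divide)
qed

lemma partB:
  fixes x y :: "real^'d" and \<beta> :: real
  assumes "\<beta> \<ge> 1" and "x \<noteq> 0" and "y \<noteq> 0"
  shows "((\<lambda>\<gamma>. cos_bg \<beta> \<gamma> x y) \<longlongrightarrow>
            vspow \<beta> ((1 / linf x) *\<^sub>R x) \<bullet> ((1 / lnorm 1 (sign_inf y)) *\<^sub>R sign_inf y)) at_top"
proof -
  define F where "F = (at_top :: real filter)"
  have ev: "eventually (\<lambda>\<gamma>. \<gamma> > 0) F" unfolding F_def by (rule eventually_gt_at_top)
  have bg: "filterlim (\<lambda>\<gamma>. \<beta> + \<gamma>) at_top F" unfolding F_def by real_asymp
  have id: "filterlim (\<lambda>\<gamma>. \<gamma>) at_top F" unfolding F_def by (rule filterlim_ident)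
  have ratio: "((\<lambda>\<gamma>. \<gamma> / (\<beta> + \<gamma>)) \<longlongrightarrow> 1) F" unfolding F_def by real_asymp
  have Lx: "((\<lambda>\<gamma>. lnorm (\<beta>+\<gamma>) x) \<longlongrightarrow> linf x) F"
    using lnorm_top[OF assms(2) bg] .
  have Mx: "linf x > 0" using linf_pos[OF assms(2)] .
  have My: "linf y > 0" using linf_pos[OF assms(3)] .
  have K: "nK y > 0" using nK_ge1[OF assms(3)] by simp
  define g where "g = (\<lambda>\<gamma>. \<Sum>i\<in>UNIV. spow \<beta> (x$i) / lnorm (\<beta>+\<gamma>) x powr \<beta> *
      (sgn (y$i) * ((\<bar>y$i\<bar> / linf y) powr \<gamma> / nT y (\<beta>+\<gamma>) powr (\<gamma> / (\<beta>+\<gamma>)))))"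
  have comp: "((\<lambda>\<gamma>. (\<bar>y$i\<bar> / linf y) powr \<gamma>) \<longlongrightarrow> (if \<bar>y$i\<bar> = linf y then 1 else 0)) F" for i
  proof -
    have a: "0 \<le> \<bar>y$i\<bar> / linf y" "\<bar>y$i\<bar> / linf y \<le> 1" using My linf_ge[of y i] by auto
    have e: "(\<bar>y$i\<bar> / linf y = 1) = (\<bar>y$i\<bar> = linf y)" using My by auto
    show ?thesis using powr_le1_top[OF a] unfolding e F_def .
  qed
  have c2: "((\<lambda>\<gamma>. sgn (y$i) * ((\<bar>y$i\<bar> / linf y) powr \<gamma> / nT y (\<beta>+\<gamma>) powr (\<gamma> / (\<beta>+\<gamma>))))
     \<longlongrightarrow> sgn (y$i) * ((if \<bar>y$i\<bar> = linf y then 1 else 0) / nK y powr 1)) F" for i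
    by (rule tendsto_mult[OF tendsto_const tendsto_divide[OF comp tendsto_powr[OF nT_top[OF assms(3) bg] ratio]]])
       (use K in auto)
  have c1: "((\<lambda>\<gamma>. spow \<beta> (x$i) / lnorm (\<beta>+\<gamma>) x powr \<beta>) \<longlongrightarrow> spow \<beta> (x$i) / linf x powr \<beta>) F" for i
    by (rule tendsto_divide[OF tendsto_const tendsto_powr[OF Lx tendsto_const]]) (use Mx in auto)
  have "(g \<longlongrightarrow> (\<Sum>i\<in>UNIV. spow \<beta> (x$i) / linf x powr \<beta> *
      (sgn (y$i) * ((if \<bar>y$i\<bar> = linf y then 1 else 0) / nK y powr 1)))) F"
    unfolding g_def by (intro tendsto_sum tendsto_mult c1 c2)
  moreover have "(\<Sum>i\<in>UNIV. spow \<beta> (x$i) / linf x powr \<beta> *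
      (sgn (y$i) * ((if \<bar>y$i\<bar> = linf y then 1 else 0) / nK y powr 1))) =
      vspow \<beta> ((1 / linf x) *\<^sub>R x) \<bullet> ((1 / lnorm 1 (sign_inf y)) *\<^sub>R sign_inf y)"
  proof -
    have e1: "vspow \<beta> ((1 / linf x) *\<^sub>R x) $ i = spow \<beta> (x$i) / linf x powr \<beta>" for i
      unfolding vspow_def using spow_div[OF Mx, of \<beta> "x$i"] by simp
    have e2: "((1 / lnorm 1 (sign_inf y)) *\<^sub>R sign_inf y) $ i = sgn (y$i) * (if \<bar>y$i\<bar> = linf y then 1 else 0) / nK y" for i
      unfolding lnorm_sign_inf[OF assms(3)] unfolding sign_inf_def by simp
    have e3: "nK y powr 1 = nK y" using K by simp
    show ?thesis unfolding inner_vec_def e1 e2 e3 by (intro sum.cong refl) simp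
  qed
  moreover have "eventually (\<lambda>\<gamma>. g \<gamma> = cos_bg \<beta> \<gamma> x y) F"
    using ev
  proof (rule eventually_mono)
    fix \<gamma> :: real assume "\<gamma> > 0"
    then have p: "\<beta> + \<gamma> > 0" using assms(1) by simp
    then have P: "lnorm (\<beta>+\<gamma>) x > 0"
      using lnorm_pos[OF assms(2), of "\<beta>+\<gamma>"] by auto
    show "g \<gamma> = cos_bg \<beta> \<gamma> x y"
      unfolding g_def cos_bg_sum by (simp only: spow_div[OF P] eqB[OF assms(3) p refl])
  qed
  ultimately show ?thesis unfolding F_def[symmetric]
    using Lim_transform_eventually[where F=F and f=g] by simp
qed

theorem mainTheorem12:
  fixes x y :: "real^'d" and \<beta> :: real
  assumes "\<beta> \<ge> 1" and "x \<noteq> 0" and "y \<noteq> 0"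
  shows "((\<lambda>\<gamma>. cos_bg \<beta> \<gamma> x y) \<longlongrightarrow>
            vspow \<beta> ((1 / lnorm \<beta> x) *\<^sub>R x) \<bullet> vsign y) (at_right 0) \<and>
         ((\<lambda>\<gamma>. cos_bg \<beta> \<gamma> x y) \<longlongrightarrow>
            vspow \<beta> ((1 / linf x) *\<^sub>R x) \<bullet> ((1 / lnorm 1 (sign_inf y)) *\<^sub>R sign_inf y)) at_top"
  using partA[OF assms] partB[OF assms] by blast

end
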